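(* Let $\pi:P\to M$ be a principal fibre bundle with group $G=P^{-1}P$, in the setting described in the context, and assume $G$ is commutative. Let $\nabla$ be a connection in $PP^{-1}$ with connection form $\omega$. Then the unique $G$-valued 2-form $\Omega$ on $M$ with $\pi^*\Omega=d\omega$ equals the curvature $R_\nabla$ (regarded as a $G$-valued 2-form via the identification of gauge-valued forms with $G$-valued forms described in the context): $R_\nabla=\Omega$.
   Context: Setting: $\Phi$ is a groupoid whose object set contains a set $M$ and an object $*\notin M$; $P$ is the set of arrows of $\Phi$ with domain $*$ and codomain in $M$; $\pi:P\to M$ the codomain map; $G=P^{-1}P:=\Phi( *,* )$ acts on $P$ from the right by precomposition, freely and transitively on fibres. $PP^{-1}$ is the full subgroupoid of $\Phi$ on $M$, acting on $P$ from the left by postcomposition; composition is right to left. $M$ and $P$ carry reflexive symmetric neighbour relations $\sim$; an infinitesimal $k$-simplex is a $(k+1)$-tuple of mutual neighbours; $\pi$ preserves $\sim$; every infinitesimal $k$-simplex in $M$ lifts to one in $P$ starting at any prescribed point over its first vertex; the right action of each $g\in G$ preserves $\sim$. A connection in $PP^{-1}$ assigns to each $a\sim b$ in $M$ an arrow $\nabla(a,b):b\to a$ of $PP^{-1}$, with $\nabla(a,a)=\mathrm{id}$, $\nabla(b,a)=\nabla(a,b)^{-1}$; its connection form is $\omega(u,v):=u^{-1}(\nabla(\pi u,\pi v)\cdot v)\in G$; its curvature is $R_\nabla(a_0,a_1,a_2)=\nabla(a_0,a_1)\nabla(a_1,a_2)\nabla(a_2,a_0)\in PP^{-1}(a_0,a_0)$.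 For a $G$-valued 1-form, $d\omega(x_0,x_1,x_2)=\omega(x_0,x_1)\omega(x_1,x_2)\omega(x_2,x_0)$. For a $G$-valued 2-form $\Omega$ on $M$, $(\pi^*\Omega)(u_0,u_1,u_2)=\Omega(\pi u_0,\pi u_1,\pi u_2)$. When $G$ is commutative, each endo-arrow $h\in PP^{-1}(a,a)$ written as $h=yx^{-1}$ with $x,y\in\pi^{-1}(a)$ is identified with $x^{-1}y\in G$ (independent of the choice of representation); this identifies the gauge group bundle with $M\times G$ and gauge-valued forms on $M$ with $G$-valued forms on $M$. *)

theory Defs
  imports Main
begin

text \<open>A groupoid given by objects Obj, arrows Arr, domain/codomain maps, composition
  (right to left: cmp g f means first f then g), identities and inverses.\<close>

definition groupoid ::
  "'o set \<Rightarrow> 'a set \<Rightarrow> ('a \<Rightarrow> 'o) \<Rightarrow> ('a \<Rightarrow> 'o) \<Rightarrow> ('a \<Rightarrow> 'a \<Rightarrow> 'a) \<Rightarrow> ('o \<Rightarrow> 'a) \<Rightarrow> ('a \<Rightarrow> 'a) \<Rightarrow> bool"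
  where
  "groupoid Obj Arr src tgt cmp ide iv \<longleftrightarrow>
     (\<forall>f\<in>Arr. src f \<in> Obj \<and> tgt f \<in> Obj) \<and>
     (\<forall>f\<in>Arr. \<forall>g\<in>Arr. src g = tgt f \<longrightarrow>
         cmp g f \<in> Arr \<and> src (cmp g f) = src f \<and> tgt (cmp g f) = tgt g) \<and>
     (\<forall>f\<in>Arr. \<forall>g\<in>Arr. \<forall>h\<in>Arr. src g = tgt f \<longrightarrow> src h = tgt g \<longrightarrow>
         cmp h (cmp g f) = cmp (cmp h g) f) \<and>
     (\<forall>x\<in>Obj. ide x \<in> Arr \<and> src (ide x) = x \<and> tgt (ide x) = x) \<and>
     (\<forall>f\<in>Arr. cmp f (ide (src f)) = f \<and> cmp (ide (tgt f)) f = f) \<and>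
     (\<forall>f\<in>Arr. iv f \<in> Arr \<and> src (iv f) = tgt f \<and> tgt (iv f) = src f \<and>
         cmp (iv f) f = ide (src f) \<and> cmp f (iv f) = ide (tgt f))"

definition bundleP :: "'a set \<Rightarrow> ('a \<Rightarrow> 'o) \<Rightarrow> ('a \<Rightarrow> 'o) \<Rightarrow> 'o set \<Rightarrow> 'o \<Rightarrow> 'a set" where
  "bundleP Arr src tgt M s = {u \<in> Arr. src u = s \<and> tgt u \<in> M}"

definition groupG :: "'a set \<Rightarrow> ('a \<Rightarrow> 'o) \<Rightarrow> ('a \<Rightarrow> 'o) \<Rightarrow> 'o \<Rightarrow> 'a set" where
  "groupG Arr src tgt s = {g \<in> Arr. src g = s \<and> tgt g = s}"

text \<open>An infinitesimal simplex in S for the neighbour relation nb: a nonempty list of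
  points of S which are mutual neighbours (a k-simplex has length k+1).\<close>
definition inf_simplex :: "'x set \<Rightarrow> ('x \<Rightarrow> 'x \<Rightarrow> bool) \<Rightarrow> 'x list \<Rightarrow> bool" where
  "inf_simplex S nb xs \<longleftrightarrow> xs \<noteq> [] \<and> set xs \<subseteq> S \<and>
     (\<forall>i<length xs. \<forall>j<length xs. nb (xs ! i) (xs ! j))"

definition pfb_setting ::
  "'o set \<Rightarrow> 'a set \<Rightarrow> ('a \<Rightarrow> 'o) \<Rightarrow> ('a \<Rightarrow> 'o) \<Rightarrow> ('a \<Rightarrow> 'a \<Rightarrow> 'a) \<Rightarrow> ('o \<Rightarrow> 'a) \<Rightarrow> ('a \<Rightarrow> 'a)
    \<Rightarrow> 'o set \<Rightarrow> 'o \<Rightarrow> ('o \<Rightarrow> 'o \<Rightarrow> bool) \<Rightarrow> ('a \<Rightarrow> 'a \<Rightarrow> bool) \<Rightarrow> bool" where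
  "pfb_setting Obj Arr src tgt cmp ide iv M s nbM nbP \<longleftrightarrow>
     groupoid Obj Arr src tgt cmp ide iv \<and>
     M \<subseteq> Obj \<and> s \<in> Obj \<and> s \<notin> M \<and>
     (\<forall>a\<in>M. \<exists>u\<in>bundleP Arr src tgt M s. tgt u = a) \<and>
     (\<forall>a\<in>M. nbM a a) \<and> (\<forall>a\<in>M. \<forall>b\<in>M. nbM a b \<longrightarrow> nbM b a) \<and>
     (\<forall>u\<in>bundleP Arr src tgt M s. nbP u u) \<and>
     (\<forall>u\<in>bundleP Arr src tgt M s. \<forall>v\<in>bundleP Arr src tgt M s. nbP u v \<longrightarrow> nbP v u) \<and>
     (\<forall>u\<in>bundleP Arr src tgt M s. \<forall>v\<in>bundleP Arr src tgt M s. nbP u v \<longrightarrow> nbM (tgt u) (tgt v)) \<and>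
     (\<forall>xs. inf_simplex M nbM xs \<longrightarrow> (\<forall>u\<in>bundleP Arr src tgt M s. tgt u = hd xs \<longrightarrow>
        (\<exists>us. inf_simplex (bundleP Arr src tgt M s) nbP us \<and> map tgt us = xs \<and> hd us = u))) \<and>
     (\<forall>g\<in>groupG Arr src tgt s. \<forall>u\<in>bundleP Arr src tgt M s. \<forall>v\<in>bundleP Arr src tgt M s.
        nbP u v \<longrightarrow> nbP (cmp u g) (cmp v g))"

definition connection ::
  "'a set \<Rightarrow> ('a \<Rightarrow> 'o) \<Rightarrow> ('a \<Rightarrow> 'o) \<Rightarrow> ('o \<Rightarrow> 'a) \<Rightarrow> ('a \<Rightarrow> 'a)
    \<Rightarrow> 'o set \<Rightarrow> ('o \<Rightarrow> 'o \<Rightarrow> bool) \<Rightarrow> ('o \<Rightarrow> 'o \<Rightarrow> 'a) \<Rightarrow> bool" where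
  "connection Arr src tgt ide iv M nbM nabla \<longleftrightarrow>
     (\<forall>a\<in>M. \<forall>b\<in>M. nbM a b \<longrightarrow>
        nabla a b \<in> Arr \<and> src (nabla a b) = b \<and> tgt (nabla a b) = a \<and>
        nabla b a = iv (nabla a b)) \<and>
     (\<forall>a\<in>M. nabla a a = ide a)"

definition conn_form ::
  "('a \<Rightarrow> 'o) \<Rightarrow> ('a \<Rightarrow> 'a \<Rightarrow> 'a) \<Rightarrow> ('a \<Rightarrow> 'a) \<Rightarrow> ('o \<Rightarrow> 'o \<Rightarrow> 'a) \<Rightarrow> 'a \<Rightarrow> 'a \<Rightarrow> 'a" where
  "conn_form tgt cmp iv nabla u v = cmp (iv u) (cmp (nabla (tgt u) (tgt v)) v)"

definition d1 :: "('a \<Rightarrow> 'a \<Rightarrow> 'a) \<Rightarrow> ('x \<Rightarrow> 'x \<Rightarrow> 'a) \<Rightarrow> 'x \<Rightarrow> 'x \<Rightarrow> 'x \<Rightarrow> 'a" where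
  "d1 cmp \<omega> x0 x1 x2 = cmp (\<omega> x0 x1) (cmp (\<omega> x1 x2) (\<omega> x2 x0))"

definition curvature :: "('a \<Rightarrow> 'a \<Rightarrow> 'a) \<Rightarrow> ('o \<Rightarrow> 'o \<Rightarrow> 'a) \<Rightarrow> 'o \<Rightarrow> 'o \<Rightarrow> 'o \<Rightarrow> 'a" where
  "curvature cmp nabla a0 a1 a2 = cmp (nabla a0 a1) (cmp (nabla a1 a2) (nabla a2 a0))"

text \<open>Identification of an endo-arrow h at a with x^{-1} h x in G, for some x over a
  (with y = h x one has h = y x^{-1} and x^{-1} y = x^{-1} h x; independent of x
  when G is commutative).\<close>
definition gauge_to_G ::
  "'a set \<Rightarrow> ('a \<Rightarrow> 'o) \<Rightarrow> ('a \<Rightarrow> 'o) \<Rightarrow> ('a \<Rightarrow> 'a \<Rightarrow> 'a) \<Rightarrow> ('a \<Rightarrow> 'a) \<Rightarrow> 'o set \<Rightarrow> 'o \<Rightarrow> 'o \<Rightarrow> 'a \<Rightarrow> 'a" where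
  "gauge_to_G Arr src tgt cmp iv M s a h =
     (let x = (SOME x. x \<in> bundleP Arr src tgt M s \<and> tgt x = a) in cmp (iv x) (cmp h x))"

end

theory Submission
  imports Defs
begin

context
  fixes Obj :: "'o set" and Arr :: "'a set" and src tgt :: "'a \<Rightarrow> 'o"
    and cmp :: "'a \<Rightarrow> 'a \<Rightarrow> 'a" and ide :: "'o \<Rightarrow> 'a" and iv :: "'a \<Rightarrow> 'a"
  assumes GR: "groupoid Obj Arr src tgt cmp ide iv"
begin

lemma cmpA[simp]: "f\<in>Arr \<Longrightarrow> g\<in>Arr \<Longrightarrow> src g = tgt f \<Longrightarrow> cmp g f \<in> Arr"
  using GR unfolding groupoid_def by blast
lemma cmpS[simp]: "f\<in>Arr \<Longrightarrow> g\<in>Arr \<Longrightarrow> src g = tgt f \<Longrightarrow> src (cmp g f) = src f"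
  using GR unfolding groupoid_def by blast
lemma cmpT[simp]: "f\<in>Arr \<Longrightarrow> g\<in>Arr \<Longrightarrow> src g = tgt f \<Longrightarrow> tgt (cmp g f) = tgt g"
  using GR unfolding groupoid_def by blast
lemma assoc[simp]: "f\<in>Arr \<Longrightarrow> g\<in>Arr \<Longrightarrow> h\<in>Arr \<Longrightarrow> src g = tgt f \<Longrightarrow> src h = tgt g \<Longrightarrow>
   cmp (cmp h g) f = cmp h (cmp g f)"
  using GR unfolding groupoid_def by metis
lemma ivA[simp]: "f\<in>Arr \<Longrightarrow> iv f \<in> Arr"
  using GR unfolding groupoid_def by blast
lemma ivS[simp]: "f\<in>Arr \<Longrightarrow> src (iv f) = tgt f"
  using GR unfolding groupoid_def by blast
lemma ivT[simp]: "f\<in>Arr \<Longrightarrow> tgt (iv f) = src f"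
  using GR unfolding groupoid_def by blast
lemma ideA[simp]: "x\<in>Obj \<Longrightarrow> ide x \<in> Arr"
  using GR unfolding groupoid_def by blast
lemma idl[simp]: "f\<in>Arr \<Longrightarrow> cmp (ide (tgt f)) f = f"
  using GR unfolding groupoid_def by blast
lemma idr[simp]: "f\<in>Arr \<Longrightarrow> cmp f (ide (src f)) = f"
  using GR unfolding groupoid_def by blast
lemma canc1[simp]: "f\<in>Arr \<Longrightarrow> k\<in>Arr \<Longrightarrow> tgt k = src f \<Longrightarrow> cmp (iv f) (cmp f k) = k"
proof -
  assume a: "f\<in>Arr" "k\<in>Arr" "tgt k = src f"
  have "cmp (iv f) (cmp f k) = cmp (cmp (iv f) f) k" using a by simp
  also have "cmp (iv f) f = ide (src f)" using GR a unfolding groupoid_def by blast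
  finally show ?thesis using a by (metis idl)
qed
lemma canc2[simp]: "f\<in>Arr \<Longrightarrow> k\<in>Arr \<Longrightarrow> tgt k = tgt f \<Longrightarrow> cmp f (cmp (iv f) k) = k"
proof -
  assume a: "f\<in>Arr" "k\<in>Arr" "tgt k = tgt f"
  have "cmp f (cmp (iv f) k) = cmp (cmp f (iv f)) k" using a by simp
  also have "cmp f (iv f) = ide (tgt f)" using GR a unfolding groupoid_def by blast
  finally show ?thesis using a by (metis idl)
qed

lemma conj_indep:
  assumes x: "x\<in>Arr" "src x = s" and u: "u\<in>Arr" "src u = s" and xu: "tgt x = tgt u"
    and h: "h\<in>Arr" "src h = tgt u" "tgt h = tgt u"
    and comm: "\<forall>g\<in>groupG Arr src tgt s. \<forall>h\<in>groupG Arr src tgt s. cmp g h = cmp h g"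
  shows "cmp (iv x) (cmp h x) = cmp (iv u) (cmp h u)"
proof -
  define g where "g = cmp (iv u) x"
  define k where "k = cmp (iv u) (cmp h u)"
  define k' where "k' = cmp (iv x) (cmp h x)"
  have gG: "g \<in> groupG Arr src tgt s" unfolding g_def groupG_def using x u xu by simp
  have kG: "k \<in> groupG Arr src tgt s" unfolding k_def groupG_def using h u by simp
  have k'G: "k' \<in> groupG Arr src tgt s" unfolding k'_def groupG_def using h x xu by simp
  have "cmp g k' = cmp (iv u) (cmp h x)" unfolding g_def k'_def using x u xu h by simp
  also have "\<dots> = cmp k g" unfolding g_def k_def using x u xu h by simp
  also have "\<dots> = cmp g k" using comm gG kG by blast
  finally have e: "cmp g k' = cmp g k" .
  have "k' = cmp (iv g) (cmp g k')" using gG k'G unfolding groupG_def by simp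
  also have "\<dots> = cmp (iv g) (cmp g k)" using e by simp
  also have "\<dots> = k" using gG kG unfolding groupG_def by simp
  finally show ?thesis unfolding k_def k'_def .
qed

end

lemma simp3: "inf_simplex S nb [a0,a1,a2] \<longleftrightarrow> a0\<in>S \<and> a1\<in>S \<and> a2\<in>S \<and>
     nb a0 a1 \<and> nb a1 a2 \<and> nb a2 a0 \<and> nb a0 a0 \<and> nb a1 a1 \<and> nb a2 a2 \<and> nb a1 a0 \<and> nb a2 a1 \<and> nb a0 a2"
    unfolding inf_simplex_def by (auto simp: less_Suc_eq nth_Cons')

theorem corollary1:
  fixes Obj :: "'o set" and Arr :: "'a set" and src tgt :: "'a \<Rightarrow> 'o"
    and cmp :: "'a \<Rightarrow> 'a \<Rightarrow> 'a" and ide :: "'o \<Rightarrow> 'a" and iv :: "'a \<Rightarrow> 'a"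
    and M :: "'o set" and s :: 'o and nbM :: "'o \<Rightarrow> 'o \<Rightarrow> bool" and nbP :: "'a \<Rightarrow> 'a \<Rightarrow> bool"
    and nabla :: "'o \<Rightarrow> 'o \<Rightarrow> 'a"
  assumes setting: "pfb_setting Obj Arr src tgt cmp ide iv M s nbM nbP"
    and commG: "\<forall>g\<in>groupG Arr src tgt s. \<forall>h\<in>groupG Arr src tgt s. cmp g h = cmp h g"
    and conn: "connection Arr src tgt ide iv M nbM nabla"
  shows
    \<comment> \<open>the curvature, read as a G-valued 2-form, is G-valued and satisfies pi^* R = d omega\<close>
    "(\<forall>a0 a1 a2. inf_simplex M nbM [a0, a1, a2] \<longrightarrow>
        gauge_to_G Arr src tgt cmp iv M s a0 (curvature cmp nabla a0 a1 a2) \<in> groupG Arr src tgt s) \<and>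
     (\<forall>u0 u1 u2. inf_simplex (bundleP Arr src tgt M s) nbP [u0, u1, u2] \<longrightarrow>
        gauge_to_G Arr src tgt cmp iv M s (tgt u0) (curvature cmp nabla (tgt u0) (tgt u1) (tgt u2))
          = d1 cmp (conn_form tgt cmp iv nabla) u0 u1 u2) \<and>
     \<comment> \<open>and every G-valued 2-form Omega on M with pi^* Omega = d omega equals R\<close>
     (\<forall>\<Omega> :: 'o \<Rightarrow> 'o \<Rightarrow> 'o \<Rightarrow> 'a.
        (\<forall>a0 a1 a2. inf_simplex M nbM [a0, a1, a2] \<longrightarrow> \<Omega> a0 a1 a2 \<in> groupG Arr src tgt s) \<longrightarrow>
        (\<forall>u0 u1 u2. inf_simplex (bundleP Arr src tgt M s) nbP [u0, u1, u2] \<longrightarrow>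
           \<Omega> (tgt u0) (tgt u1) (tgt u2) = d1 cmp (conn_form tgt cmp iv nabla) u0 u1 u2) \<longrightarrow>
        (\<forall>a0 a1 a2. inf_simplex M nbM [a0, a1, a2] \<longrightarrow>
           \<Omega> a0 a1 a2 = gauge_to_G Arr src tgt cmp iv M s a0 (curvature cmp nabla a0 a1 a2)))"
proof -
  note S = setting[unfolded pfb_setting_def]
  have GR: "groupoid Obj Arr src tgt cmp ide iv" using S by (rule conjunct1)
  have S5: "\<forall>a\<in>M. \<exists>u\<in>bundleP Arr src tgt M s. tgt u = a"
    using S[THEN conjunct2, THEN conjunct2, THEN conjunct2, THEN conjunct2] by (rule conjunct1)
  have S10: "\<forall>u\<in>bundleP Arr src tgt M s. \<forall>v\<in>bundleP Arr src tgt M s. nbP u v \<longrightarrow> nbM (tgt u) (tgt v)"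
    using S[THEN conjunct2, THEN conjunct2, THEN conjunct2, THEN conjunct2, THEN conjunct2,
      THEN conjunct2, THEN conjunct2, THEN conjunct2, THEN conjunct2] by (rule conjunct1)
  have S11: "\<forall>xs. inf_simplex M nbM xs \<longrightarrow> (\<forall>u\<in>bundleP Arr src tgt M s. tgt u = hd xs \<longrightarrow>
        (\<exists>us. inf_simplex (bundleP Arr src tgt M s) nbP us \<and> map tgt us = xs \<and> hd us = u))"
    using S[THEN conjunct2, THEN conjunct2, THEN conjunct2, THEN conjunct2, THEN conjunct2,
      THEN conjunct2, THEN conjunct2, THEN conjunct2, THEN conjunct2, THEN conjunct2] by (rule conjunct1)
  have exP: "\<And>a. a \<in> M \<Longrightarrow> \<exists>u\<in>bundleP Arr src tgt M s. tgt u = a"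
    using S5 by blast
  have nbPM: "\<And>u v. u\<in>bundleP Arr src tgt M s \<Longrightarrow> v\<in>bundleP Arr src tgt M s \<Longrightarrow> nbP u v \<Longrightarrow> nbM (tgt u) (tgt v)"
    using S10 by blast
  have lift: "\<And>xs u. inf_simplex M nbM xs \<Longrightarrow> u\<in>bundleP Arr src tgt M s \<Longrightarrow> tgt u = hd xs \<Longrightarrow>
        \<exists>us. inf_simplex (bundleP Arr src tgt M s) nbP us \<and> map tgt us = xs \<and> hd us = u"
    using S11 by blast
  have nab: "\<And>a b. a\<in>M \<Longrightarrow> b\<in>M \<Longrightarrow> nbM a b \<Longrightarrow> nabla a b \<in> Arr \<and> src (nabla a b) = b \<and> tgt (nabla a b) = a"
    using conn unfolding connection_def by blast
  define x where "x a = (SOME x. x \<in> bundleP Arr src tgt M s \<and> tgt x = a)" for a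
  have xP: "\<And>a. a\<in>M \<Longrightarrow> x a \<in> bundleP Arr src tgt M s \<and> tgt (x a) = a"
    unfolding x_def by (rule someI_ex) (use exP in blast)
  have gdef: "\<And>a h. gauge_to_G Arr src tgt cmp iv M s a h = cmp (iv (x a)) (cmp h (x a))"
    unfolding gauge_to_G_def x_def Let_def by simp
  have RA: "curvature cmp nabla a0 a1 a2 \<in> Arr \<and> src (curvature cmp nabla a0 a1 a2) = a0
      \<and> tgt (curvature cmp nabla a0 a1 a2) = a0" if "inf_simplex M nbM [a0, a1, a2]" for a0 a1 a2
    using that nab[of a0 a1] nab[of a1 a2] nab[of a2 a0] unfolding simp3 curvature_def
    by (simp add: cmpA[OF GR] cmpS[OF GR] cmpT[OF GR])
  have part1: "\<forall>a0 a1 a2. inf_simplex M nbM [a0, a1, a2] \<longrightarrow>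
        gauge_to_G Arr src tgt cmp iv M s a0 (curvature cmp nabla a0 a1 a2) \<in> groupG Arr src tgt s"
  proof (intro allI impI)
    fix a0 a1 a2 assume h: "inf_simplex M nbM [a0, a1, a2]"
    then have "a0 \<in> M" unfolding simp3 by blast
    then show "gauge_to_G Arr src tgt cmp iv M s a0 (curvature cmp nabla a0 a1 a2) \<in> groupG Arr src tgt s"
      using xP[of a0] RA[OF h] unfolding gdef groupG_def bundleP_def
      by (simp add: cmpA[OF GR] cmpS[OF GR] cmpT[OF GR] ivA[OF GR] ivS[OF GR] ivT[OF GR])
  qed
  have part2: "\<forall>u0 u1 u2. inf_simplex (bundleP Arr src tgt M s) nbP [u0, u1, u2] \<longrightarrow>
        gauge_to_G Arr src tgt cmp iv M s (tgt u0) (curvature cmp nabla (tgt u0) (tgt u1) (tgt u2))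
          = d1 cmp (conn_form tgt cmp iv nabla) u0 u1 u2"
  proof (intro allI impI)
    fix u0 u1 u2 assume h: "inf_simplex (bundleP Arr src tgt M s) nbP [u0, u1, u2]"
    then have hs: "inf_simplex M nbM [tgt u0, tgt u1, tgt u2]" and
      us: "u0 \<in> bundleP Arr src tgt M s" "u1 \<in> bundleP Arr src tgt M s" "u2 \<in> bundleP Arr src tgt M s"
      unfolding simp3 using nbPM by (auto simp: bundleP_def)
    have M: "tgt u0 \<in> M" "tgt u1 \<in> M" "tgt u2 \<in> M" using us unfolding bundleP_def by auto
    have n: "nbM (tgt u0) (tgt u1)" "nbM (tgt u1) (tgt u2)" "nbM (tgt u2) (tgt u0)"
      using hs unfolding simp3 by auto
    note N = nab[OF M(1) M(2) n(1)] nab[OF M(2) M(3) n(2)] nab[OF M(3) M(1) n(3)]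
    have "gauge_to_G Arr src tgt cmp iv M s (tgt u0) (curvature cmp nabla (tgt u0) (tgt u1) (tgt u2))
        = cmp (iv u0) (cmp (curvature cmp nabla (tgt u0) (tgt u1) (tgt u2)) u0)"
      unfolding gdef
      apply (rule conj_indep[OF GR _ _ _ _ _ _ _ _ commG])
      using xP[OF M(1)] us RA[OF hs] unfolding bundleP_def by auto
    also have "\<dots> = d1 cmp (conn_form tgt cmp iv nabla) u0 u1 u2"
      using N us unfolding d1_def conn_form_def curvature_def bundleP_def
      by (simp add: cmpA[OF GR] cmpS[OF GR] cmpT[OF GR] ivA[OF GR] ivS[OF GR] ivT[OF GR]
          assoc[OF GR] canc1[OF GR] canc2[OF GR])
    finally show "gauge_to_G Arr src tgt cmp iv M s (tgt u0) (curvature cmp nabla (tgt u0) (tgt u1) (tgt u2))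
          = d1 cmp (conn_form tgt cmp iv nabla) u0 u1 u2" .
  qed
  have part3: "\<forall>\<Omega> :: 'o \<Rightarrow> 'o \<Rightarrow> 'o \<Rightarrow> 'a.
        (\<forall>a0 a1 a2. inf_simplex M nbM [a0, a1, a2] \<longrightarrow> \<Omega> a0 a1 a2 \<in> groupG Arr src tgt s) \<longrightarrow>
        (\<forall>u0 u1 u2. inf_simplex (bundleP Arr src tgt M s) nbP [u0, u1, u2] \<longrightarrow>
           \<Omega> (tgt u0) (tgt u1) (tgt u2) = d1 cmp (conn_form tgt cmp iv nabla) u0 u1 u2) \<longrightarrow>
        (\<forall>a0 a1 a2. inf_simplex M nbM [a0, a1, a2] \<longrightarrow>
           \<Omega> a0 a1 a2 = gauge_to_G Arr src tgt cmp iv M s a0 (curvature cmp nabla a0 a1 a2))"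
  proof (intro allI impI)
    fix \<Omega> :: "'o \<Rightarrow> 'o \<Rightarrow> 'o \<Rightarrow> 'a" and a0 a1 a2
    assume H: "\<forall>u0 u1 u2. inf_simplex (bundleP Arr src tgt M s) nbP [u0, u1, u2] \<longrightarrow>
           \<Omega> (tgt u0) (tgt u1) (tgt u2) = d1 cmp (conn_form tgt cmp iv nabla) u0 u1 u2"
      and h: "inf_simplex M nbM [a0, a1, a2]"
    have "a0 \<in> M" using h unfolding simp3 by blast
    from xP[OF this] obtain us where us: "inf_simplex (bundleP Arr src tgt M s) nbP us"
      "map tgt us = [a0,a1,a2]"
      using lift[OF h, of "x a0"] by auto
    then obtain u0 u1 u2 where e: "us = [u0,u1,u2]" "tgt u0 = a0" "tgt u1 = a1" "tgt u2 = a2"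
      by (auto simp: map_eq_Cons_conv)
    have sx: "inf_simplex (bundleP Arr src tgt M s) nbP [u0, u1, u2]" using us(1) e(1) by simp
    have "\<Omega> (tgt u0) (tgt u1) (tgt u2) = d1 cmp (conn_form tgt cmp iv nabla) u0 u1 u2"
      using H sx by blast
    also have "\<dots> = gauge_to_G Arr src tgt cmp iv M s (tgt u0) (curvature cmp nabla (tgt u0) (tgt u1) (tgt u2))"
      using part2 sx by simp
    finally show "\<Omega> a0 a1 a2 = gauge_to_G Arr src tgt cmp iv M s a0 (curvature cmp nabla a0 a1 a2)"
      using e by simp
  qed
  show ?thesis by (intro conjI part1 part2 part3)
qed

end
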